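(* Let $X_1\in\mathbb{B}^2\setminus\{0\}$ and $c=\rho_{\mathbb{B}^2}(0,X_1)$. Let $M_0$ be one of the two points of $L_{0X_1}(0)\cap S^1$. For $k\ge1$, given $X_1,\dots,X_k$ on the line $L(0,X_1)$, let $M_k$ be the point of $L_{0X_1}(X_k)\cap S^1$ lying on the same side of $L(0,X_1)$ as $M_0$, let $N_{k+1}$ be the intersection point of the line $L(M_{k-1},X_k)$ with $S^1$ other than $M_{k-1}$, and let $X_{k+1}=L_{0X_1}(N_{k+1})\cap L(0,X_1)$. Then all $X_k$ lie on the radius of $\mathbb{B}^2$ through $X_1$ and $\rho_{\mathbb{B}^2}(0,X_k)=kc$ for every $k\ge1$.
   Context: $\mathbb{B}^2$ is the unit disk, $S^1$ the unit circle, $\rho_{\mathbb{B}^2}$ the hyperbolic distance given by $\sinh\frac{\rho_{\mathbb{B}^2}(x,y)}{2}=\frac{|x-y|}{\sqrt{1-|x|^2}\sqrt{1-|y|^2}}$. $L(p,q)$ is the line through $p,q$, and $L_{0X_1}(p)$ is the line through $p$ orthogonal to $L(0,X_1)$. *)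

theory Defs
  imports "HOL-Analysis.Analysis"
begin

text \<open>The plane is modelled by the complex numbers; the unit disk is ball 0 1 and S^1 is sphere 0 1.\<close>

definition hyp_dist :: "complex \<Rightarrow> complex \<Rightarrow> real" where
  "hyp_dist x y = 2 * arsinh (cmod (x - y) / (sqrt (1 - (cmod x)\<^sup>2) * sqrt (1 - (cmod y)\<^sup>2)))"

definition line :: "complex \<Rightarrow> complex \<Rightarrow> complex set" where
  "line p q = {p + of_real t * (q - p) | t. True}"

definition perp_line :: "complex \<Rightarrow> complex \<Rightarrow> complex \<Rightarrow> complex set" where
  "perp_line a b p = {z. inner (z - p) (b - a) = 0}"

definition same_side :: "complex \<Rightarrow> complex \<Rightarrow> complex \<Rightarrow> complex \<Rightarrow> bool" where
  "same_side a b u v \<longleftrightarrow> Im (cnj (b - a) * (u - a)) * Im (cnj (b - a) * (v - a)) > 0"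

definition radius_through :: "complex \<Rightarrow> complex set" where
  "radius_through x = {of_real t * (x / of_real (cmod x)) | t. 0 \<le> t \<and> t < 1}"

end

theory Submission
  imports Defs
begin


lemma tanh_over_sqrt: "tanh (y::real) / sqrt (1 - (tanh y)\<^sup>2) = sinh y"
proof -
  have c: "cosh y > 0" by simp
  have "1 - (tanh y)\<^sup>2 = 1 / (cosh y)\<^sup>2"
  proof -
    have "(cosh y)\<^sup>2 \<noteq> 0" using c by simp
    thus ?thesis using cosh_square_eq[of y] by (simp add: tanh_def power_divide divide_simps)
  qed
  hence "sqrt (1 - (tanh y)\<^sup>2) = 1 / cosh y" using c by (simp add: real_sqrt_divide)
  thus ?thesis using c by (simp add: tanh_def)
qed

lemma r_tanh:
  fixes r :: real assumes "0 \<le> r" "r < 1"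
  shows "r = tanh (arsinh (r / sqrt (1 - r\<^sup>2)))"
proof -
  define s where "s = r / sqrt (1 - r\<^sup>2)"
  have q: "1 - r\<^sup>2 > 0" using assms by (simp add: abs_square_less_1)
  have "(cosh (arsinh s))\<^sup>2 = s\<^sup>2 + 1" using cosh_square_eq[of "arsinh s"] by simp
  also have "\<dots> = 1 / (1 - r\<^sup>2)" using q by (simp add: s_def power_divide field_simps)
  finally have "cosh (arsinh s) = sqrt (1 / (1 - r\<^sup>2))"
    by (metis cosh_real_pos less_eq_real_def real_sqrt_unique)
  hence "cosh (arsinh s) = 1 / sqrt (1 - r\<^sup>2)" by (simp add: real_sqrt_divide)
  thus ?thesis using q by (simp add: tanh_def s_def)
qed

lemma tanh_step:
  fixes a x y \<alpha> \<beta> :: real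
  assumes "a = tanh \<alpha>" "x = tanh \<beta>" "1 - 2*a*x + x\<^sup>2 \<noteq> 0"
    "y * (1 - 2*a*x + x\<^sup>2) = 2*x - a - a*x\<^sup>2"
  shows "y = tanh (2*\<beta> - \<alpha>)"
proof -
  define A where "A = exp (-2*\<alpha>)"
  define B where "B = exp (-2*\<beta>)"
  have A: "A > 0" "B > 0" by (auto simp: A_def B_def)
  have e: "exp (- 2 * (2*\<beta> - \<alpha>)) = B*B / A"
    by (simp add: A_def B_def exp_add[symmetric] exp_diff[symmetric] algebra_simps)
  have ta: "a = (1 - A)/(1+A)" using assms(1) by (simp add: tanh_real_altdef A_def)
  have tb: "x = (1 - B)/(1+B)" using assms(2) by (simp add: tanh_real_altdef B_def)
  have tt: "tanh (2*\<beta> - \<alpha>) = (A - B*B)/(A + B*B)"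
  proof -
    have "(1 - B*B/A)/(1 + B*B/A) = (A - B*B)/(A+B*B)" using A by (simp add: divide_simps)
    thus ?thesis unfolding tanh_real_altdef e .
  qed
  have "tanh (2*\<beta> - \<alpha>) * (1 - 2*a*x + x\<^sup>2) = 2*x - a - a*x\<^sup>2"
  proof -
    have p: "1+A > 0" "1+B>0" "A+B*B>0" using A by (auto simp: add_pos_pos)
    show ?thesis unfolding tt ta tb using p
      by (simp add: divide_simps power2_eq_square) (simp add: algebra_simps)
  qed
  thus ?thesis using assms(3,4)
    by (metis mult_right_cancel)
qed


lemma geom:
  fixes u M N :: complex and x :: real
  assumes u: "cmod u = 1" and M: "cmod M = 1" and N: "cmod N = 1"
    and L: "N \<in> line M (of_real x * u)" and NM: "N \<noteq> M"
  shows "1 - 2*Re(cnj u * M)*x + x\<^sup>2 \<noteq> 0 \<and>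
    Re(cnj u * N) * (1 - 2*Re(cnj u * M)*x + x\<^sup>2) = 2*x - Re(cnj u * M) - Re(cnj u * M)*x\<^sup>2"
proof -
  obtain t where t: "N = M + of_real t * (of_real x * u - M)" using L by (auto simp: line_def)
  have uu: "cnj u * u = 1" using u complex_norm_square[of u] by (simp add: mult.commute)
  define m where "m = cnj u * M"
  define n where "n = cnj u * N"
  define a where "a = Re m"
  define b where "b = Im m"
  have nm: "n = m + of_real t * (of_real x - m)"
    unfolding n_def m_def t using uu by (simp add: algebra_simps mult.commute)
  have cm: "cmod m = 1" using u M by (simp add: m_def norm_mult)
  have cn: "cmod n = 1" using u N by (simp add: n_def norm_mult)
  have ab: "a\<^sup>2 + b\<^sup>2 = 1" using cm unfolding a_def b_def cmod_def by simp
  have rn: "Re n = a + t*(x-a)" "Im n = b - t*b" unfolding nm by (auto simp: a_def b_def algebra_simps)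
  have "(Re n)\<^sup>2 + (Im n)\<^sup>2 = 1" using cn unfolding cmod_def by simp
  hence e: "(a + t*(x-a))\<^sup>2 + (b - t*b)\<^sup>2 = 1" using rn by simp
  have tn: "t \<noteq> 0"
  proof
    assume "t = 0" hence "N = M" using t by simp
    thus False using NM by simp
  qed
  have "t * (t*(x\<^sup>2 - 2*a*x + 1) - 2*(1 - a*x)) = 0"
  proof -
    have "(a + t*(x-a))\<^sup>2 + (b - t*b)\<^sup>2 - 1 = t * (t*(x\<^sup>2 - 2*a*x + 1) - 2*(1 - a*x)) + (a\<^sup>2+b\<^sup>2-1)*(1-t)\<^sup>2"
      by (simp add: power2_eq_square algebra_simps)
    thus ?thesis using e ab by simp
  qed
  hence tD: "t*(x\<^sup>2 - 2*a*x + 1) = 2*(1 - a*x)" using tn by simp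
  have D: "1 - 2*a*x + x\<^sup>2 \<noteq> 0"
  proof
    assume "1 - 2*a*x + x\<^sup>2 = 0"
    hence "(x - a)\<^sup>2 + b\<^sup>2 = 0" using ab by (simp add: power2_eq_square algebra_simps)
    hence "x = a" "b = 0" by (auto simp: sum_power2_eq_zero_iff)
    hence "m = of_real x" unfolding a_def b_def by (simp add: complex_eq_iff)
    hence "u * m = of_real x * u" by simp
    moreover have "u * m = M" proof -
      have "u * (cnj u * M) = (cnj u * u) * M" by (simp only: mult.assoc mult.left_commute)
      thus ?thesis using uu by (simp add: m_def)
    qed
    ultimately have "N = M" using t by simp
    thus False using NM by simp
  qed
  have "Re n * (1 - 2*a*x + x\<^sup>2) = a*(1 - 2*a*x + x\<^sup>2) + (x-a) * (t*(x\<^sup>2 - 2*a*x + 1))"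
    unfolding rn(1) by (simp add: algebra_simps)
  also have "\<dots> = 2*x - a - a*x\<^sup>2" unfolding tD by (simp add: algebra_simps power2_eq_square)
  finally show ?thesis using D unfolding a_def m_def n_def by simp
qed

lemma inner_ru: "inner z (of_real r * u) = r * Re (cnj u * z)"
  by (simp add: inner_complex_def algebra_simps)

theorem corollary4p4:
  fixes X M N :: "nat \<Rightarrow> complex" and c :: real
  assumes X1_disk: "X 1 \<in> ball 0 1" and X1_nz: "X 1 \<noteq> 0"
    and c_def: "c = hyp_dist 0 (X 1)"
    and M0: "M 0 \<in> perp_line 0 (X 1) 0 \<inter> sphere 0 1"
    and Mk: "\<And>k. k \<ge> 1 \<Longrightarrow> M k \<in> perp_line 0 (X 1) (X k) \<inter> sphere 0 1
                         \<and> same_side 0 (X 1) (M k) (M 0)"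
    and Nk: "\<And>k. k \<ge> 1 \<Longrightarrow> N (k + 1) \<in> line (M (k - 1)) (X k) \<inter> sphere 0 1
                         \<and> N (k + 1) \<noteq> M (k - 1)"
    and Xk: "\<And>k. k \<ge> 1 \<Longrightarrow> X (k + 1) \<in> perp_line 0 (X 1) (N (k + 1)) \<inter> line 0 (X 1)"
  shows "\<forall>k \<ge> 1. X k \<in> radius_through (X 1) \<and> hyp_dist 0 (X k) = real k * c"
proof -
  define r where "r = cmod (X 1)"
  define u where "u = X 1 / of_real r"
  have r0: "r > 0" using X1_nz by (simp add: r_def)
  have r1: "r < 1" using X1_disk by (simp add: r_def)
  have X1u: "X 1 = of_real r * u" using r0 by (simp add: u_def)
  have cu: "cmod u = 1" using r0 by (simp add: u_def norm_divide r_def)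
  have uu: "cnj u * u = 1" using cu complex_norm_square[of u] by (simp add: mult.commute)
  have Reu: "Re (cnj u * (of_real s * u)) = s" for s
  proof -
    have e: "cnj u * (of_real s * u) = of_real s" using uu by (metis mult.left_commute mult.right_neutral)
    show ?thesis unfolding e by simp
  qed
  define h where "h = arsinh (r / sqrt (1 - r\<^sup>2))"
  have ch: "c = 2 * h" unfolding c_def hyp_dist_def h_def r_def by simp
  have h0: "h \<ge> 0" unfolding h_def using r0 r1
    by (metis arsinh_real_neg_iff not_less divide_nonneg_nonneg less_eq_real_def real_sqrt_ge_zero
        diff_ge_0_iff_ge abs_square_le_1 abs_of_pos)
  have rt: "r = tanh h" unfolding h_def using r0 r1 by (intro r_tanh) auto
  define T where "T k = tanh (real k * h)" for k :: nat
  have perp: "z \<in> perp_line 0 (X 1) p \<longleftrightarrow> Re (cnj u * z) = Re (cnj u * p)" for z p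
  proof -
    have "inner (z - p) (of_real r * u) = r * (Re (cnj u * z) - Re (cnj u * p))"
      by (simp add: inner_complex_def algebra_simps)
    thus ?thesis unfolding perp_line_def X1u using r0 by simp
  qed
  have onl: "z \<in> line 0 (X 1) \<Longrightarrow> z = of_real (Re (cnj u * z)) * u" for z
  proof -
    assume "z \<in> line 0 (X 1)"
    then obtain t where "z = of_real t * (of_real r * u)" unfolding line_def X1u by auto
    hence zt: "z = of_real (t * r) * u" by (simp add: mult.assoc)
    show ?thesis unfolding zt Reu ..
  qed
  have sph: "cmod (M k) = 1" for k
    using M0 Mk[of k] by (cases "k = 0") auto
  have main: "Re (cnj u * M k) = T k \<and> X (k+1) = of_real (T (k+1)) * u" for k
  proof (induction k)
    case 0
    have "Re (cnj u * M 0) = 0" using M0 perp by simp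
    thus ?case using X1u rt by (simp add: T_def)
  next
    case (Suc k)
    have N: "N (k + 2) \<in> line (M k) (X (k+1))" "cmod (N (k+2)) = 1" "N (k+2) \<noteq> M k"
      using Nk[of "k+1"] by (auto simp: numeral_2_eq_2)
    have N1': "N (k+2) \<in> line (M k) (of_real (T (k+1)) * u)" using N(1) Suc.IH by simp
    note g = geom[OF cu sph N(2) N1' N(3), unfolded conjunct1[OF Suc.IH]]
    have "Re(cnj u * N (k+2)) = tanh (2*(real (k+1)*h) - real k * h)"
      using g by (intro tanh_step[of _ "real k * h" _ "real (k+1) * h"]) (auto simp: T_def)
    also have "2*(real (k+1)*h) - real k * h = real (k+2) * h" by (simp add: algebra_simps)
    finally have RN: "Re(cnj u * N (k+2)) = T (k+2)" by (simp add: T_def)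
    have XX: "X (k+2) \<in> perp_line 0 (X 1) (N (k+2))" "X (k+2) \<in> line 0 (X 1)"
      using Xk[of "k+1"] by (auto simp: numeral_2_eq_2)
    have X2: "X (Suc k + 1) = of_real (T (Suc k + 1)) * u"
    proof -
      have "Re (cnj u * X (k+2)) = T (k+2)" using XX(1) RN perp by simp
      hence "X (k+2) = of_real (T (k+2)) * u" using onl[OF XX(2)] by metis
      thus ?thesis by (simp add: numeral_2_eq_2)
    qed
    have "M (k+1) \<in> perp_line 0 (X 1) (X (k+1))" using Mk[of "k+1"] by simp
    hence "Re (cnj u * M (Suc k)) = T (Suc k)" using perp Suc.IH Reu by simp
    thus ?case using X2 by simp
  qed
  show ?thesis
  proof (intro allI impI conjI)
    fix k :: nat assume k: "k \<ge> 1"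
    then obtain j where kj: "k = j + 1" by (metis le_add_diff_inverse2)
    have Xk': "X k = of_real (T k) * u" using main[of j] kj by simp
    have T0: "T k \<ge> 0" "T k < 1" using h0 by (auto simp: T_def tanh_real_lt_1)
    show "X k \<in> radius_through (X 1)"
      unfolding radius_through_def Xk' u_def r_def using T0 by auto
    have "hyp_dist 0 (X k) = 2 * arsinh (T k / sqrt (1 - (T k)\<^sup>2))"
      unfolding hyp_dist_def Xk' using T0 cu by (simp add: norm_mult)
    also have "\<dots> = 2 * (real k * h)" unfolding T_def tanh_over_sqrt arsinh_sinh_real ..
    finally show "hyp_dist 0 (X k) = real k * c" using ch by simp
  qed
qed

end
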